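(* Let $W=\mathrm{inv}(\pi)$ and let $W^\ast=\mathrm{inv}(\pi^\ast)$, where $\pi^\ast$ is constructed from $\pi$ as described in the context. Then $W^\ast$ has the $W$-size biased distribution.
   Context: Let $h\ge 2$, let $n_1,\dots,n_h$ be positive integers, $n=n_1+\dots+n_h\ge 4$, and let $\pi$ be a uniformly distributed permutation of the multiset $\{1^{n_1},\dots,h^{n_h}\}$ (a sequence $(\pi(1),\dots,\pi(n))$ in which each $a$ occurs $n_a$ times, all such sequences equally likely). $\mathrm{inv}(\pi)$ is the number of pairs $i<j$ with $\pi(i)>\pi(j)$. For a nonnegative integrable random variable $W$ with $\mathbb{E}W>0$, a random variable $W^\ast$ has the $W$-size biased distribution if $\mathbb{E}(Wf(W))=\mathbb{E}W\,\mathbb{E}f(W^\ast)$ for all continuous $f$ for which the left side exists. Construction of $\pi^\ast$: Let $I$ be uniformly distributed over pairs $(i,j)$ with $1\le i<j\le n$; let $J=(a,b)$, for $h\ge a>b\ge 1$, with probability $n_an_b/\sum_{c<d}n_cn_d$; $\pi,I,J$ are independent. If $I=(i,j)$ and $\pi(i)>\pi(j)$, set $\pi^\ast=\pi$. If $I=(i,j)$, $\pi(i)\le\pi(j)$ and $J=(a,b)$: choose $i^\ast$ uniformly from $\{k:\pi(k)=a\}$ and $j^\ast$ uniformly from $\{k:\pi(k)=b\}$, independently of each other and of all else. Then: (1) if $\{i,j\}\cap\{i^\ast,j^\ast\}=\emptyset$, or $i=i^\ast,j\ne j^\ast$, or $i\ne i^\ast,j=j^\ast$, obtain $\pi^\ast$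 from $\pi$ by exchanging the entries at positions $i$ and $i^\ast$ and exchanging the entries at positions $j$ and $j^\ast$; (2) if $i=j^\ast$ and $j=i^\ast$, obtain $\pi^\ast$ by exchanging the entries at positions $i$ and $j$; (3) if $i=j^\ast$, $j\ne i^\ast$, set $\pi^\ast(i)=\pi(i^\ast)$, $\pi^\ast(j)=\pi(i)$, $\pi^\ast(i^\ast)=\pi(j)$, and $\pi^\ast(k)=\pi(k)$ for $k\notin\{i,j,i^\ast\}$; (4) if $i\ne j^\ast$, $j=i^\ast$, set $\pi^\ast(i)=\pi(j)$, $\pi^\ast(j)=\pi(j^\ast)$, $\pi^\ast(j^\ast)=\pi(i)$, and $\pi^\ast(k)=\pi(k)$ for $k\notin\{i,j,j^\ast\}$. *)

theory Defs
  imports "HOL-Probability.Probability"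
begin

text \<open>Sequences are lists; positions are 0-indexed (0 .. N-1); values are 1..h.
  The multiplicities are given by a function ns with ns a = n_a for a in {1..h}.\<close>

definition total :: "(nat \<Rightarrow> nat) \<Rightarrow> nat \<Rightarrow> nat" where
  "total ns h = (\<Sum>a\<in>{1..h}. ns a)"

definition mperms :: "(nat \<Rightarrow> nat) \<Rightarrow> nat \<Rightarrow> nat list set" where
  "mperms ns h = {xs. length xs = total ns h \<and> set xs \<subseteq> {1..h} \<and>
                     (\<forall>a\<in>{1..h}. count_list xs a = ns a)}"

definition inversions :: "nat list \<Rightarrow> nat" where
  "inversions xs = card {(i, j). i < j \<and> j < length xs \<and> xs ! i > xs ! j}"

definition Ipairs :: "nat \<Rightarrow> (nat \<times> nat) set" where
  "Ipairs N = {(i, j). i < j \<and> j < N}"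

definition Jmset :: "(nat \<Rightarrow> nat) \<Rightarrow> nat \<Rightarrow> (nat \<times> nat) multiset" where
  "Jmset ns h = (\<Sum>a\<in>{1..h}. \<Sum>b\<in>{1..<a}. replicate_mset (ns a * ns b) (a, b))"

definition Jpmf :: "(nat \<Rightarrow> nat) \<Rightarrow> nat \<Rightarrow> (nat \<times> nat) pmf" where
  "Jpmf ns h = pmf_of_multiset (Jmset ns h)"

definition step :: "nat list \<Rightarrow> nat \<Rightarrow> nat \<Rightarrow> nat \<Rightarrow> nat \<Rightarrow> nat list" where
  "step xs i j is js =
     (if i = js \<and> j = is then xs[i := xs ! j, j := xs ! i]
      else if i = js then xs[i := xs ! is, j := xs ! i, is := xs ! j]
      else if j = is then xs[i := xs ! j, j := xs ! js, js := xs ! i]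
      else (let ys = xs[i := xs ! is, is := xs ! i] in ys[j := ys ! js, js := ys ! j]))"

definition positions :: "nat list \<Rightarrow> nat \<Rightarrow> nat set" where
  "positions xs a = {k. k < length xs \<and> xs ! k = a}"

definition pi_pmf :: "(nat \<Rightarrow> nat) \<Rightarrow> nat \<Rightarrow> nat list pmf" where
  "pi_pmf ns h = pmf_of_set (mperms ns h)"

definition pistar_pmf :: "(nat \<Rightarrow> nat) \<Rightarrow> nat \<Rightarrow> nat list pmf" where
  "pistar_pmf ns h =
     do {
       xs \<leftarrow> pi_pmf ns h;
       (i, j) \<leftarrow> pmf_of_set (Ipairs (total ns h));
       (a, b) \<leftarrow> Jpmf ns h;
       if xs ! i > xs ! j then return_pmf xs
       else do {
         is \<leftarrow> pmf_of_set (positions xs a);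
         js \<leftarrow> pmf_of_set (positions xs b);
         return_pmf (step xs i j is js)
       }
     }"

definition size_biased :: "real pmf \<Rightarrow> real pmf \<Rightarrow> bool" where
  "size_biased W Ws \<longleftrightarrow>
     (\<forall>f :: real \<Rightarrow> real. continuous_on UNIV f \<longrightarrow>
        integrable (measure_pmf W) (\<lambda>w. w * f w) \<longrightarrow>
        integrable (measure_pmf Ws) f \<and>
        measure_pmf.expectation W (\<lambda>w. w * f w) =
          measure_pmf.expectation W (\<lambda>w. w) * measure_pmf.expectation Ws f)"

end

theory Submission
  imports Defs
begin

definition iota :: "nat \<Rightarrow> nat \<Rightarrow> nat \<Rightarrow> nat \<Rightarrow> nat \<times> nat" where
  "iota i j s t = (if t = i \<and> s = j then (j,i) else if t = i then (j,s) else if s = j then (t,i) else (s,t))"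

definition R :: "nat \<Rightarrow> nat \<Rightarrow> nat \<Rightarrow> nat \<Rightarrow> nat \<Rightarrow> nat" where
 "R i j s t k = (if t = i \<and> s = j then (if k=i then j else if k=j then i else k)
   else if t = i then (if k=i then s else if k=j then i else if k=s then j else k)
   else if s = j then (if k=i then j else if k=j then t else if k=t then i else k)
   else (if k=i then s else if k=s then i else if k=j then t else if k=t then j else k))"

lemma length_step[simp]: "length (step x i j s t) = length x"
  unfolding step_def Let_def by simp

lemma step_R:
  assumes "i \<noteq> j" "s \<noteq> t" "i < length x" "j < length x" "s < length x" "t < length x" "k < length x"
  shows "step x i j s t ! k = x ! R i j s t k"
proof (cases "t = i \<and> s = j")
  case True
  then show ?thesis using assms unfolding step_def R_def by (simp add: nth_list_update)
next
  case F1: False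
  show ?thesis
  proof (cases "t = i")
    case True
    then show ?thesis using assms F1 unfolding step_def R_def by (simp add: nth_list_update)
  next
    case F2: False
    show ?thesis
    proof (cases "s = j")
      case True
      then show ?thesis using assms F1 F2 unfolding step_def R_def by (simp add: nth_list_update)
    next
      case False
      then show ?thesis using assms F1 F2 unfolding step_def R_def Let_def by (simp add: nth_list_update)
    qed
  qed
qed

lemma R_less: "i < n \<Longrightarrow> j < n \<Longrightarrow> s < n \<Longrightarrow> t < n \<Longrightarrow> k < n \<Longrightarrow> R i j s t k < n"
  unfolding R_def by simp

lemma R_vals:
  assumes "i \<noteq> j" "s \<noteq> t"
  shows "R i j s t i = s" "R i j s t j = t" "R i j s t (fst (iota i j s t)) = i" "R i j s t (snd (iota i j s t)) = j"
  using assms unfolding R_def iota_def by auto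

lemma R_inv:
  assumes "i \<noteq> j" "s \<noteq> t"
  shows "R i j s t (R i j (fst (iota i j s t)) (snd (iota i j s t)) k) = k"
proof (cases "t = i \<and> s = j")
  case True
  then show ?thesis using assms unfolding R_def iota_def by auto
next
  case F1: False
  show ?thesis
  proof (cases "t = i")
    case True
    then show ?thesis using assms F1 unfolding R_def iota_def by auto
  next
    case F2: False
    show ?thesis
    proof (cases "s = j")
      case True
      then show ?thesis using assms F1 F2 unfolding R_def iota_def by auto
    next
      case False
      then show ?thesis using assms F1 F2 unfolding R_def iota_def by auto
    qed
  qed
qed


lemma iota_props:
  assumes "i \<noteq> j" "s \<noteq> t" "i < n" "j < n" "s < n" "t < n"
  shows "fst (iota i j s t) < n" "snd (iota i j s t) < n" "fst (iota i j s t) \<noteq> snd (iota i j s t)"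
  using assms unfolding iota_def by auto

lemma iota_iota:
  assumes "s \<noteq> t" shows "iota i j (fst (iota i j s t)) (snd (iota i j s t)) = (s,t)"
  using assms unfolding iota_def by auto

lemma step_nth:
  assumes "i \<noteq> j" "s \<noteq> t" "i < length x" "j < length x" "s < length x" "t < length x"
  shows "step x i j s t ! i = x ! s" "step x i j s t ! j = x ! t"
    "step x i j s t ! fst (iota i j s t) = x ! i" "step x i j s t ! snd (iota i j s t) = x ! j"
proof -
  note p = iota_props[OF assms(1,2) assms(3-6)]
  show "step x i j s t ! i = x ! s" using step_R[OF assms, of i] R_vals[OF assms(1,2)] assms by simp
  show "step x i j s t ! j = x ! t" using step_R[OF assms, of j] R_vals[OF assms(1,2)] assms by simp
  show "step x i j s t ! fst (iota i j s t) = x ! i"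
    using step_R[OF assms, of "fst (iota i j s t)"] R_vals[OF assms(1,2)] assms p by simp
  show "step x i j s t ! snd (iota i j s t) = x ! j"
    using step_R[OF assms, of "snd (iota i j s t)"] R_vals[OF assms(1,2)] assms p by simp
qed

lemma step_step:
  assumes "i \<noteq> j" "s \<noteq> t" "i < length x" "j < length x" "s < length x" "t < length x"
  shows "step (step x i j s t) i j (fst (iota i j s t)) (snd (iota i j s t)) = x"
proof (rule nth_equalityI)
  show "length (step (step x i j s t) i j (fst (iota i j s t)) (snd (iota i j s t))) = length x" by simp
  fix k assume k: "k < length (step (step x i j s t) i j (fst (iota i j s t)) (snd (iota i j s t)))"
  then have k': "k < length x" by simp
  note p = iota_props[OF assms(1,2) assms(3-6)]
  have r: "R i j (fst (iota i j s t)) (snd (iota i j s t)) k < length x"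
    using R_less[OF assms(3,4) p(1,2) k'] .
  have "step (step x i j s t) i j (fst (iota i j s t)) (snd (iota i j s t)) ! k
      = step x i j s t ! R i j (fst (iota i j s t)) (snd (iota i j s t)) k"
    using step_R[of i j "fst (iota i j s t)" "snd (iota i j s t)" "step x i j s t" k] assms p k' by simp
  also have "\<dots> = x ! R i j s t (R i j (fst (iota i j s t)) (snd (iota i j s t)) k)"
    using step_R[OF assms r] .
  also have "\<dots> = x ! k" using R_inv[OF assms(1,2)] by simp
  finally show "step (step x i j s t) i j (fst (iota i j s t)) (snd (iota i j s t)) ! k = x ! k" .
qed

lemma mset_step:
  assumes "i \<noteq> j" "s \<noteq> t" "i < length x" "j < length x" "s < length x" "t < length x"
  shows "mset (step x i j s t) = mset x"
proof -
  define sw where "sw = (\<lambda>(y::nat list) a b. y[a := y ! b, b := y ! a])"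
  have swl[simp]: "length (sw y a b) = length y" for y a b unfolding sw_def by simp
  have sw: "mset (sw y a b) = mset y" if "a < length y" "b < length y" for y a b
    using mset_swap[OF that(2,1)] unfolding sw_def by (cases "a = b") (auto simp: list_update_swap)
  show ?thesis
  proof (cases "i = t \<and> j = s")
    case True
    then show ?thesis using sw[of i x j] assms unfolding step_def sw_def by simp
  next
    case F1: False
    show ?thesis
    proof (cases "i = t")
      case True
      have "step x i j s t = sw (sw x i j) i s"
        apply (rule nth_equalityI)
        using assms F1 True unfolding step_def sw_def by (auto simp: nth_list_update)
      then show ?thesis using assms by (simp add: sw)
    next
      case F2: False
      show ?thesis
      proof (cases "j = s")
        case True
        have "step x i j s t = sw (sw x i j) j t"
          apply (rule nth_equalityI)
          using assms F1 F2 True unfolding step_def sw_def by (auto simp: nth_list_update)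
        then show ?thesis using assms by (simp add: sw)
      next
        case False
        have "step x i j s t = sw (sw x i s) j t"
          using F1 F2 False unfolding step_def sw_def Let_def by simp
        then show ?thesis using assms by (simp add: sw)
      qed
    qed
  qed
qed


lemma size_msum: "size (sum f A :: 'a multiset) = (\<Sum>a\<in>A. size (f a))"
  by (induct A rule: infinite_finite_induct) simp_all

lemma card_positions: "card (positions x a) = count_list x a"
proof -
  have "{k. k < length x \<and> x!k = a} = {i. i < length x \<and> a = x!i}" by auto
  then show ?thesis unfolding positions_def count_list_eq_length_filter length_filter_conv_card by simp
qed

lemma finite_positions[simp]: "finite (positions x a)"
  unfolding positions_def by simp

lemma mperms_mset:
  assumes "x \<in> mperms ns h" "mset y = mset x" shows "y \<in> mperms ns h"
proof -
  have "length y = length x" using assms(2) by (metis size_mset)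
  moreover have "set y = set x" using assms(2) by (metis set_mset_mset)
  moreover have "count_list y a = count_list x a" for a using assms(2) by (metis count_mset)
  ultimately show ?thesis using assms(1) unfolding mperms_def by auto
qed

lemma mperms_length: "x \<in> mperms ns h \<Longrightarrow> length x = total ns h"
  unfolding mperms_def by auto

lemma mperms_val: "x \<in> mperms ns h \<Longrightarrow> k < length x \<Longrightarrow> x ! k \<in> {1..h}"
  unfolding mperms_def using nth_mem by blast

lemma mperms_count: "x \<in> mperms ns h \<Longrightarrow> a \<in> {1..h} \<Longrightarrow> count_list x a = ns a"
  unfolding mperms_def by auto

lemma finite_mperms: "finite (mperms ns h)"
proof -
  have "mperms ns h \<subseteq> {xs. set xs \<subseteq> {1..h} \<and> length xs = total ns h}"
    unfolding mperms_def by auto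
  then show ?thesis using finite_lists_length_eq[of "{1..h}" "total ns h"] finite_subset by blast
qed

lemma count_list_replicate: "count_list (replicate n a) b = (if a = b then n else 0)"
  by (induct n) auto

lemma witness:
  "length (concat (map (\<lambda>a. replicate (ns a) a) [1..<Suc h])) = total ns h \<and>
   set (concat (map (\<lambda>a. replicate (ns a) a) [1..<Suc h])) \<subseteq> {1..h} \<and>
   (\<forall>b. count_list (concat (map (\<lambda>a. replicate (ns a) a) [1..<Suc h])) b = (if b \<in> {1..h} then ns b else 0))"
proof (induct h)
  case 0
  then show ?case by (simp add: total_def)
next
  case (Suc h)
  have t: "total ns (Suc h) = total ns h + ns (Suc h)" unfolding total_def by simp
  show ?case using Suc by (auto simp: t count_list_replicate)
qed

lemma mperms_nonempty: "mperms ns h \<noteq> {}"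
proof -
  have "concat (map (\<lambda>a. replicate (ns a) a) [1..<Suc h]) \<in> mperms ns h"
    using witness[of ns h] unfolding mperms_def by auto
  then show ?thesis by blast
qed

lemma sum_nth_count:
  fixes g :: "nat \<Rightarrow> nat"
  assumes "x \<in> mperms ns h"
  shows "(\<Sum>u<length x. g (x ! u)) = (\<Sum>a\<in>{1..h}. ns a * g a)"
proof -
  have "(\<Sum>u<length x. g (x ! u)) = sum_list (map g x)"
    by (simp add: sum_list_sum_nth atLeast0LessThan)
  also have "\<dots> = (\<Sum>a\<in>{1..h}. count_list x a * g a)"
    using sum_list_map_eq_sum_count2[of x "{1..h}" g] assms unfolding mperms_def
    by simp
  also have "\<dots> = (\<Sum>a\<in>{1..h}. ns a * g a)"
    using assms by (intro sum.cong) (auto simp: mperms_count)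
  finally show ?thesis .
qed


definition TT :: "(nat \<Rightarrow> nat) \<Rightarrow> nat \<Rightarrow> nat" where
  "TT ns h = (\<Sum>a\<in>{1..h}. \<Sum>b\<in>{1..<a}. ns a * ns b)"

lemma size_Jmset: "size (Jmset ns h) = TT ns h"
  unfolding Jmset_def TT_def by (simp add: size_msum)

lemma count_Jmset: "count (Jmset ns h) (a, b) = (if a \<in> {1..h} \<and> b \<in> {1..<a} then ns a * ns b else 0)"
proof -
  have "count (Jmset ns h) (a, b) = (\<Sum>a'\<in>{1..h}. \<Sum>b'\<in>{1..<a'}. count (replicate_mset (ns a' * ns b') (a', b')) (a, b))"
    unfolding Jmset_def by (simp only: count_sum)
  also have "\<dots> = (\<Sum>a'\<in>{1..h}. if a' = a then (\<Sum>b'\<in>{1..<a'}. if b' = b then ns a' * ns b' else 0) else 0)"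
    by (intro sum.cong refl) auto
  also have "\<dots> = (if a \<in> {1..h} then (\<Sum>b'\<in>{1..<a}. if b' = b then ns a * ns b' else 0) else 0)"
    by (rule sum.delta) simp
  also have "\<dots> = (if a \<in> {1..h} \<and> b \<in> {1..<a} then ns a * ns b else 0)"
    by (simp add: sum.delta)
  finally show ?thesis .
qed

lemma card_desc_pairs:
  assumes x: "x \<in> mperms ns h"
  shows "card {(u,v). u < length x \<and> v < length x \<and> x!v < x!u} = TT ns h"
proof -
  have eq: "{(u,v). u < length x \<and> v < length x \<and> x!v < x!u} = Sigma {..<length x} (\<lambda>u. {v. v < length x \<and> x!v < x!u})"
    by auto
  have c1: "card {v. v < length x \<and> x!v < c} = (\<Sum>b\<in>{1..<c}. ns b)" if c: "c \<in> {1..h}" for c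
  proof -
    have e1: "{v. v < length x \<and> x!v < c} = {v\<in>{..<length x}. x!v < c}" by auto
    have "card {v. v < length x \<and> x!v < c} = (\<Sum>v\<in>{v\<in>{..<length x}. x!v < c}. 1)"
      unfolding e1 by (rule card_eq_sum)
    also have "\<dots> = (\<Sum>v<length x. if x!v < c then 1 else 0)"
      by (rule sum.inter_filter) simp
    also have "\<dots> = (\<Sum>b\<in>{1..h}. ns b * (if b < c then 1 else 0))"
      by (rule sum_nth_count[OF x])
    also have "\<dots> = (\<Sum>b\<in>{1..h}. if b < c then ns b else 0)"
      by (intro sum.cong) auto
    also have "\<dots> = (\<Sum>b\<in>{b\<in>{1..h}. b < c}. ns b)"
      by (rule sum.inter_filter[symmetric]) simp
    also have "{b\<in>{1..h}. b < c} = {1..<c}" using c by auto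
    finally show ?thesis .
  qed
  have "card {(u,v). u < length x \<and> v < length x \<and> x!v < x!u} = (\<Sum>u<length x. card {v. v < length x \<and> x!v < x!u})"
    unfolding eq by (rule card_SigmaI) simp_all
  also have "\<dots> = (\<Sum>u<length x. \<Sum>b\<in>{1..<x!u}. ns b)"
    using mperms_val[OF x] by (intro sum.cong refl c1) auto
  also have "\<dots> = (\<Sum>a\<in>{1..h}. ns a * (\<Sum>b\<in>{1..<a}. ns b))"
    by (rule sum_nth_count[OF x])
  also have "\<dots> = TT ns h" unfolding TT_def by (simp add: sum_distrib_left)
  finally show ?thesis .
qed

lemma card_asc_pairs:
  assumes x: "x \<in> mperms ns h"
  shows "card {(u,v). u < total ns h \<and> v < total ns h \<and> u \<noteq> v \<and> x!u \<le> x!v} =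
         card {(u,v). u < total ns h \<and> v < total ns h \<and> u \<noteq> (v::nat)} - TT ns h"
proof -
  let ?N = "total ns h"
  let ?E = "{(u,v). u < ?N \<and> v < ?N \<and> u \<noteq> v \<and> x!u \<le> x!v}"
  let ?G = "{(u,v). u < ?N \<and> v < ?N \<and> x!v < x!u}"
  let ?O = "{(u,v). u < ?N \<and> v < ?N \<and> u \<noteq> (v::nat)}"
  have fO: "finite ?O" by (rule finite_subset[of _ "{..<?N} \<times> {..<?N}"]) auto
  have "?O = ?E \<union> ?G" by auto
  moreover have "?E \<inter> ?G = {}" by auto
  ultimately have "card ?O = card ?E + card ?G"
    using fO by (metis (no_types, lifting) card_Un_disjoint finite_Un)
  moreover have "card ?G = TT ns h" using card_desc_pairs[OF x] mperms_length[OF x] by simp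
  ultimately show ?thesis by simp
qed

lemma fibre_card:
  assumes sig: "\<sigma> \<in> mperms ns h" and ij: "i < j" "j < total ns h" and gt: "\<sigma>!j < \<sigma>!i"
  shows "card (Sigma {x\<in>mperms ns h. \<not> x!j < x!i}
           (\<lambda>x. {(s,t). s < total ns h \<and> t < total ns h \<and> x!t < x!s \<and> step x i j s t = \<sigma>}))
       = card {(u,v). u < total ns h \<and> v < total ns h \<and> u \<noteq> v \<and> \<sigma>!u \<le> \<sigma>!v}"
  (is "card ?D = card ?E")
proof -
  let ?N = "total ns h"
  have lsig: "length \<sigma> = ?N" using mperms_length[OF sig] .
  define g where "g = (\<lambda>(u,v). (step \<sigma> i j u v, iota i j u v))"
  define f where "f = (\<lambda>(x::nat list, s, t). iota i j s t)"
  have "bij_betw g ?E ?D"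
  proof (rule bij_betw_byWitness[where f' = f])
    show "\<forall>a\<in>?E. f (g a) = a"
      unfolding f_def g_def by (auto simp: iota_iota case_prod_beta)
    show "\<forall>a\<in>?D. g (f a) = a"
    proof
      fix a assume a: "a \<in> ?D"
      then obtain x s t where a': "a = (x, s, t)" "x \<in> mperms ns h" "s < ?N" "t < ?N" "x!t < x!s"
          "step x i j s t = \<sigma>" by auto
      have lx: "length x = ?N" using mperms_length a' by blast
      have st: "s \<noteq> t" using a' by auto
      have e1: "f a = iota i j s t" unfolding f_def a' by simp
      have e2: "g (iota i j s t) = (step \<sigma> i j (fst (iota i j s t)) (snd (iota i j s t)), iota i j (fst (iota i j s t)) (snd (iota i j s t)))"
        unfolding g_def by (simp add: case_prod_beta)
      have e3: "step \<sigma> i j (fst (iota i j s t)) (snd (iota i j s t)) = x"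
        using step_step[of i j s t x] a' lx ij st by simp
      show "g (f a) = a" using e1 e2 e3 iota_iota[OF st] a'(1) by simp
    qed
    show "g ` ?E \<subseteq> ?D"
    proof
      fix b assume "b \<in> g ` ?E"
      then obtain u v where uv: "b = g (u,v)" "u < ?N" "v < ?N" "u \<noteq> v" "\<sigma>!u \<le> \<sigma>!v" by auto
      define x where "x = step \<sigma> i j u v"
      define s where "s = fst (iota i j u v)"
      define t where "t = snd (iota i j u v)"
      have ij': "i \<noteq> j" using ij by simp
      have xm: "x \<in> mperms ns h"
        unfolding x_def using mset_step[OF ij' uv(4)] lsig ij uv by (intro mperms_mset[OF sig]) auto
      have n: "x ! i = \<sigma> ! u" "x ! j = \<sigma> ! v" "x ! s = \<sigma> ! i" "x ! t = \<sigma> ! j"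
        using step_nth[OF ij' uv(4)] lsig ij uv unfolding x_def s_def t_def by auto
      have stN: "s < ?N" "t < ?N" "s \<noteq> t" using iota_props[OF ij' uv(4)] ij uv unfolding s_def t_def by auto
      have "step x i j s t = \<sigma>"
        using step_step[OF ij' uv(4)] lsig ij uv iota_iota[OF uv(4)] unfolding x_def s_def t_def by auto
      moreover have "b = (x, s, t)" unfolding g_def x_def s_def t_def using uv(1) by (simp add: g_def case_prod_beta)
      ultimately show "b \<in> ?D" using uv(5) n xm stN gt by simp
    qed
    show "f ` ?D \<subseteq> ?E"
    proof
      fix b assume "b \<in> f ` ?D"
      then obtain x s t where a': "b = f (x, s, t)" "x \<in> mperms ns h" "\<not> x!j < x!i" "s < ?N" "t < ?N" "x!t < x!s"
          "step x i j s t = \<sigma>" by auto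
      have lx: "length x = ?N" using mperms_length a' by blast
      have st: "s \<noteq> t" using a' by auto
      have ij': "i \<noteq> j" using ij by simp
      obtain u v where uv: "iota i j s t = (u, v)" by fastforce
      have e: "b = (u, v)" using uv unfolding a'(1) f_def by simp
      have n: "\<sigma> ! u = x ! i" "\<sigma> ! v = x ! j"
        using step_nth[OF ij' st, of x] a' lx ij uv by auto
      have p: "u < ?N" "v < ?N" "u \<noteq> v"
        using iota_props[OF ij' st, of ?N] a' ij uv by auto
      show "b \<in> ?E" unfolding e using n p a'(3) by simp
    qed
  qed
  from bij_betw_same_card[OF this] show ?thesis by simp
qed

lemma fibre_empty:
  assumes ij: "i < j" "j < total ns h" and nt: "\<not> (\<sigma> \<in> mperms ns h \<and> \<sigma>!j < \<sigma>!i)"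
  shows "Sigma {x\<in>mperms ns h. \<not> x!j < x!i}
           (\<lambda>x. {(s,t). s < total ns h \<and> t < total ns h \<and> x!t < x!s \<and> step x i j s t = \<sigma>}) = {}"
proof (rule ccontr)
  assume "\<not> ?thesis" (is "?S \<noteq> {}")
  then obtain p where "p \<in> ?S" by blast
  then obtain x s t where "(x, s, t) \<in> ?S" by (cases p) auto
  then have a': "x \<in> mperms ns h" "s < total ns h" "t < total ns h" "x!t < x!s"
          "step x i j s t = \<sigma>" by simp_all
  have lx: "length x = total ns h" using mperms_length a' by blast
  have st: "s \<noteq> t" using a' by auto
  have ij': "i \<noteq> j" using ij by simp
  have "mset \<sigma> = mset x" using mset_step[OF ij' st, of x] lx ij a'(2,3) unfolding a'(5) by simp
  then have "\<sigma> \<in> mperms ns h" by (rule mperms_mset[OF a'(1)])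
  moreover have "\<sigma>!i = x!s" "\<sigma>!j = x!t" using step_nth(1,2)[OF ij' st, of x] lx ij a'(2,3) unfolding a'(5) by auto
  then have "\<sigma>!j < \<sigma>!i" using a'(4) by simp
  ultimately show False using nt by simp
qed


lemma pmf_bind_fin:
  assumes "finite A" "set_pmf p \<subseteq> A"
  shows "pmf (bind_pmf p f) y = (\<Sum>x\<in>A. pmf p x * pmf (f x) y)"
proof -
  have "pmf (bind_pmf p f) y = (\<Sum>x\<in>A. pmf (f x) y * pmf p x)"
    unfolding pmf_bind using assms by (intro integral_measure_pmf_real) (auto simp: set_pmf_iff)
  then show ?thesis by (simp add: mult.commute)
qed

definition Jset :: "nat \<Rightarrow> (nat \<times> nat) set" where
  "Jset h = Sigma {1..h} (\<lambda>a. {1..<a})"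

lemma finite_Jset[simp]: "finite (Jset h)" unfolding Jset_def by auto

lemma reindex_ST:
  fixes g :: "nat \<Rightarrow> nat \<Rightarrow> real"
  assumes x: "x \<in> mperms ns h"
  shows "(\<Sum>ab\<in>Jset h. \<Sum>s\<in>positions x (fst ab). \<Sum>t\<in>positions x (snd ab). g s t)
       = (\<Sum>st\<in>{(s,t). s < total ns h \<and> t < total ns h \<and> x!t < x!s}. g (fst st) (snd st))"
proof -
  have lx: "length x = total ns h" using mperms_length[OF x] .
  have "(\<Sum>ab\<in>Jset h. \<Sum>s\<in>positions x (fst ab). \<Sum>t\<in>positions x (snd ab). g s t)
      = (\<Sum>ab\<in>Jset h. \<Sum>st\<in>positions x (fst ab) \<times> positions x (snd ab). g (fst st) (snd st))"
    by (intro sum.cong refl) (simp add: sum.cartesian_product case_prod_beta)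
  also have "\<dots> = (\<Sum>p\<in>Sigma (Jset h) (\<lambda>ab. positions x (fst ab) \<times> positions x (snd ab)). g (fst (snd p)) (snd (snd p)))"
    by (subst sum.Sigma) (simp_all add: case_prod_beta)
  also have "\<dots> = (\<Sum>st\<in>{(s,t). s < total ns h \<and> t < total ns h \<and> x!t < x!s}. g (fst st) (snd st))"
  proof (rule sum.reindex_bij_witness[where j = snd and i = "\<lambda>st. ((x ! fst st, x ! snd st), st)"])
    fix p assume "p \<in> Sigma (Jset h) (\<lambda>ab. positions x (fst ab) \<times> positions x (snd ab))"
    then show "((x ! fst (snd p), x ! snd (snd p)), snd p) = p"
      unfolding positions_def by auto
  next
    fix p assume "p \<in> Sigma (Jset h) (\<lambda>ab. positions x (fst ab) \<times> positions x (snd ab))"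
    then show "snd p \<in> {(s,t). s < total ns h \<and> t < total ns h \<and> x!t < x!s}"
      unfolding positions_def Jset_def using lx by auto
  next
    fix st assume "st \<in> {(s,t). s < total ns h \<and> t < total ns h \<and> x!t < x!s}"
    then show "snd ((x ! fst st, x ! snd st), st) = st" by simp
  next
    fix st assume st: "st \<in> {(s,t). s < total ns h \<and> t < total ns h \<and> x!t < x!s}"
    then have v: "x ! fst st \<in> {1..h}" "x ! snd st \<in> {1..h}" using mperms_val[OF x] lx by auto
    show "((x ! fst st, x ! snd st), st) \<in> Sigma (Jset h) (\<lambda>ab. positions x (fst ab) \<times> positions x (snd ab))"
      using st v lx unfolding positions_def Jset_def by auto
  next
    fix p show "g (fst (snd p)) (snd (snd p)) = g (fst (snd p)) (snd (snd p))" by simp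
  qed
  finally show ?thesis .
qed

lemma sum_indicator_card:
  assumes "finite S"
  shows "(\<Sum>p\<in>S. if P p then 1 else 0) = real (card {p\<in>S. P p})"
proof -
  have "real (card {p\<in>S. P p}) = (\<Sum>p\<in>{p\<in>S. P p}. 1)" by simp
  also have "\<dots> = (\<Sum>p\<in>S. if P p then 1 else 0)" by (rule sum.inter_filter) (rule assms)
  finally show ?thesis by simp
qed


definition inner_pmf :: "(nat \<Rightarrow> nat) \<Rightarrow> nat \<Rightarrow> nat list \<Rightarrow> nat \<Rightarrow> nat \<Rightarrow> nat list pmf" where
  "inner_pmf ns h x i j = (Jpmf ns h \<bind> (\<lambda>(a, b). if x ! i > x ! j then return_pmf x
           else do { is \<leftarrow> pmf_of_set (positions x a);
                     js \<leftarrow> pmf_of_set (positions x b);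
                     return_pmf (step x i j is js) }))"

lemma pistar_eq: "pistar_pmf ns h = pi_pmf ns h \<bind> (\<lambda>x. pmf_of_set (Ipairs (total ns h)) \<bind> (\<lambda>(i, j). inner_pmf ns h x i j))"
  unfolding pistar_pmf_def inner_pmf_def by (rule refl)

context
  fixes ns :: "nat \<Rightarrow> nat" and h :: nat
  assumes h2: "h \<ge> 2" and pos: "\<forall>a\<in>{1..h}. ns a > 0" and N4: "total ns h \<ge> 4"
begin

lemma Jmset_ne: "Jmset ns h \<noteq> {#}"
proof -
  have "count (Jmset ns h) (2, 1) = ns 2 * ns 1" using h2 by (simp add: count_Jmset)
  moreover have "ns 2 > 0" "ns 1 > 0" using pos h2 by auto
  ultimately have "count (Jmset ns h) (2, 1) > 0" by simp
  then show ?thesis by auto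
qed

lemma TT_pos: "TT ns h > 0"
proof -
  have "size (Jmset ns h) \<noteq> 0" using Jmset_ne by simp
  then show ?thesis using size_Jmset[of ns h] by simp
qed

lemma set_Jpmf: "set_pmf (Jpmf ns h) \<subseteq> Jset h"
proof
  fix p assume "p \<in> set_pmf (Jpmf ns h)"
  then have "p \<in># Jmset ns h" unfolding Jpmf_def using Jmset_ne by simp
  then have "count (Jmset ns h) p > 0" by simp
  then show "p \<in> Jset h" unfolding Jset_def by (cases p) (auto simp: count_Jmset split: if_splits)
qed

lemma pmf_Jpmf: "ab \<in> Jset h \<Longrightarrow> pmf (Jpmf ns h) ab = real (ns (fst ab) * ns (snd ab)) / real (TT ns h)"
  unfolding Jpmf_def using Jmset_ne by (cases ab) (simp add: count_Jmset size_Jmset Jset_def)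

lemma positions_ne: "x \<in> mperms ns h \<Longrightarrow> a \<in> {1..h} \<Longrightarrow> positions x a \<noteq> {}"
proof -
  assume x: "x \<in> mperms ns h" and a: "a \<in> {1..h}"
  have "card (positions x a) > 0" using card_positions[of x a] mperms_count[OF x a] pos a by simp
  then show ?thesis by auto
qed

lemma card_positions': "x \<in> mperms ns h \<Longrightarrow> a \<in> {1..h} \<Longrightarrow> card (positions x a) = ns a"
  by (simp add: card_positions mperms_count)

lemma ind_eq: "indicator {y} z = (if z = y then 1 else (0::real))"
  by (simp add: indicator_def)

lemma inner:
  assumes x: "x \<in> mperms ns h"
  shows "pmf (Jpmf ns h \<bind> (\<lambda>(a, b). if x ! i > x ! j then return_pmf x
           else do { is \<leftarrow> pmf_of_set (positions x a);
                     js \<leftarrow> pmf_of_set (positions x b);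
                     return_pmf (step x i j is js) })) \<sigma>
   = (if x ! j < x ! i then (if x = \<sigma> then 1 else 0)
      else real (card {(s,t). s < total ns h \<and> t < total ns h \<and> x!t < x!s \<and> step x i j s t = \<sigma>}) / real (TT ns h))"
proof (cases "x ! j < x ! i")
  case True
  have "(\<lambda>(a, b). if x ! i > x ! j then return_pmf x
           else do { is \<leftarrow> pmf_of_set (positions x a);
                     js \<leftarrow> pmf_of_set (positions x b);
                     return_pmf (step x i j is js) }) = (\<lambda>_. return_pmf x)"
    using True by auto
  then show ?thesis using True by simp
next
  case False
  let ?ST = "{(s,t). s < total ns h \<and> t < total ns h \<and> x!t < x!s}"
  have fST: "finite ?ST" by (rule finite_subset[of _ "{..<total ns h} \<times> {..<total ns h}"]) auto
  have inn: "pmf (do { is \<leftarrow> pmf_of_set (positions x a);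
                     js \<leftarrow> pmf_of_set (positions x b);
                     return_pmf (step x i j is js) }) \<sigma>
        = (\<Sum>s\<in>positions x a. \<Sum>t\<in>positions x b. if step x i j s t = \<sigma> then 1 else 0) / (real (ns a) * real (ns b))"
    if ab: "(a, b) \<in> Jset h" for a b
  proof -
    have a: "a \<in> {1..h}" and b: "b \<in> {1..h}" using ab unfolding Jset_def by auto
    have "pmf (do { is \<leftarrow> pmf_of_set (positions x a);
                     js \<leftarrow> pmf_of_set (positions x b);
                     return_pmf (step x i j is js) }) \<sigma>
        = (\<Sum>s\<in>positions x a. (\<Sum>t\<in>positions x b. if step x i j s t = \<sigma> then 1 else 0) / real (ns b)) / real (ns a)"
      unfolding pmf_bind_pmf_of_set[OF positions_ne[OF x a] finite_positions]
        pmf_bind_pmf_of_set[OF positions_ne[OF x b] finite_positions] pmf_return ind_eq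
        card_positions'[OF x a] card_positions'[OF x b] by (rule refl)
    also have "\<dots> = (\<Sum>s\<in>positions x a. \<Sum>t\<in>positions x b. if step x i j s t = \<sigma> then 1 else 0) / (real (ns a) * real (ns b))"
      by (simp add: sum_divide_distrib[symmetric])
    finally show ?thesis .
  qed
  have "pmf (Jpmf ns h \<bind> (\<lambda>(a, b). if x ! i > x ! j then return_pmf x
           else do { is \<leftarrow> pmf_of_set (positions x a);
                     js \<leftarrow> pmf_of_set (positions x b);
                     return_pmf (step x i j is js) })) \<sigma>
      = (\<Sum>ab\<in>Jset h. pmf (Jpmf ns h) ab * pmf ((\<lambda>(a, b). if x ! i > x ! j then return_pmf x
           else do { is \<leftarrow> pmf_of_set (positions x a);
                     js \<leftarrow> pmf_of_set (positions x b);
                     return_pmf (step x i j is js) }) ab) \<sigma>)"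
    by (rule pmf_bind_fin[OF finite_Jset set_Jpmf])
  also have "\<dots> = (\<Sum>ab\<in>Jset h. (\<Sum>s\<in>positions x (fst ab). \<Sum>t\<in>positions x (snd ab). if step x i j s t = \<sigma> then 1 else 0) / real (TT ns h))"
  proof (intro sum.cong refl)
    fix ab assume ab: "ab \<in> Jset h"
    obtain a b where e: "ab = (a, b)" by (cases ab)
    have a: "a \<in> {1..h}" and b: "b \<in> {1..h}" using ab e unfolding Jset_def by auto
    have "ns a > 0" "ns b > 0" using a b pos by auto
    then show "pmf (Jpmf ns h) ab * pmf ((\<lambda>(a, b). if x ! i > x ! j then return_pmf x
           else do { is \<leftarrow> pmf_of_set (positions x a);
                     js \<leftarrow> pmf_of_set (positions x b);
                     return_pmf (step x i j is js) }) ab) \<sigma>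
      = (\<Sum>s\<in>positions x (fst ab). \<Sum>t\<in>positions x (snd ab). if step x i j s t = \<sigma> then 1 else 0) / real (TT ns h)"
      using False inn[of a b] ab pmf_Jpmf[OF ab] unfolding e by simp
  qed
  also have "\<dots> = (\<Sum>ab\<in>Jset h. \<Sum>s\<in>positions x (fst ab). \<Sum>t\<in>positions x (snd ab). if step x i j s t = \<sigma> then 1 else 0) / real (TT ns h)"
    by (simp add: sum_divide_distrib)
  also have "\<dots> = (\<Sum>st\<in>?ST. if step x i j (fst st) (snd st) = \<sigma> then 1 else 0) / real (TT ns h)"
    using reindex_ST[OF x, of "\<lambda>s t. if step x i j s t = \<sigma> then 1 else 0"] by simp
  also have "\<dots> = real (card {st\<in>?ST. step x i j (fst st) (snd st) = \<sigma>}) / real (TT ns h)"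
    using sum_indicator_card[OF fST] by simp
  also have "{st\<in>?ST. step x i j (fst st) (snd st) = \<sigma>} = {(s,t). s < total ns h \<and> t < total ns h \<and> x!t < x!s \<and> step x i j s t = \<sigma>}"
    by auto
  finally show ?thesis using False by simp
qed


definition Kc :: nat where
  "Kc = card {(u,v). u < total ns h \<and> v < total ns h \<and> u \<noteq> (v::nat)} - TT ns h"

lemma Hsum:
  assumes ij: "i < j" "j < total ns h"
  shows "(\<Sum>x\<in>mperms ns h. pmf (inner_pmf ns h x i j) \<sigma>)
       = (if \<sigma> \<in> mperms ns h \<and> \<sigma>!j < \<sigma>!i then 1 + real Kc / real (TT ns h) else 0)"
proof -
  let ?M = "mperms ns h"
  let ?F = "\<lambda>x. {(s,t). s < total ns h \<and> t < total ns h \<and> x!t < x!s \<and> step x i j s t = \<sigma>}"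
  let ?A = "{x\<in>?M. \<not> x!j < x!i}"
  have finF: "finite (?F x)" for x
    by (rule finite_subset[of _ "{..<total ns h} \<times> {..<total ns h}"]) auto
  have finA: "finite ?A" using finite_mperms by simp
  have "(\<Sum>x\<in>?M. pmf (inner_pmf ns h x i j) \<sigma>)
      = (\<Sum>x\<in>?M. (if x ! j < x ! i then (if x = \<sigma> then 1 else 0) else real (card (?F x)) / real (TT ns h)))"
    unfolding inner_pmf_def by (intro sum.cong refl inner) 
  also have "\<dots> = (\<Sum>x\<in>?M. (if x = \<sigma> then (if \<sigma> ! j < \<sigma> ! i then 1 else 0) else 0))
               + (\<Sum>x\<in>?M. (if \<not> x ! j < x ! i then real (card (?F x)) / real (TT ns h) else 0))"
    by (subst sum.distrib[symmetric]) (intro sum.cong refl, auto)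
  also have "(\<Sum>x\<in>?M. (if x = \<sigma> then (if \<sigma> ! j < \<sigma> ! i then 1 else 0) else 0))
      = (if \<sigma> \<in> ?M then (if \<sigma> ! j < \<sigma> ! i then 1 else 0) else 0)"
    using finite_mperms by (simp add: sum.delta')
  also have "(\<Sum>x\<in>?M. (if \<not> x ! j < x ! i then real (card (?F x)) / real (TT ns h) else 0))
      = (\<Sum>x\<in>?A. real (card (?F x)) / real (TT ns h))"
    by (rule sum.inter_filter[symmetric]) (rule finite_mperms)
  also have "\<dots> = real (\<Sum>x\<in>?A. card (?F x)) / real (TT ns h)"
    by (simp add: sum_divide_distrib)
  also have "(\<Sum>x\<in>?A. card (?F x)) = card (Sigma ?A ?F)"
    by (rule card_SigmaI[symmetric]) (use finA finF in simp_all)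
  finally have e: "(\<Sum>x\<in>?M. pmf (inner_pmf ns h x i j) \<sigma>)
     = (if \<sigma> \<in> ?M then (if \<sigma> ! j < \<sigma> ! i then 1 else 0) else 0) + real (card (Sigma ?A ?F)) / real (TT ns h)" .
  show ?thesis
  proof (cases "\<sigma> \<in> ?M \<and> \<sigma>!j < \<sigma>!i")
    case True
    have "card (Sigma ?A ?F) = Kc"
      using fibre_card[of \<sigma> ns h i j] card_asc_pairs[of \<sigma> ns h] True ij unfolding Kc_def by simp
    then show ?thesis using e True by simp
  next
    case False
    have "Sigma ?A ?F = {}" using fibre_empty[OF ij False] .
    then show ?thesis using e False by auto
  qed
qed

lemma pmf_pistar:
  "pmf (pistar_pmf ns h) \<sigma> = (if \<sigma> \<in> mperms ns h then
      (1 + real Kc / real (TT ns h)) * real (inversions \<sigma>) / (real (card (Ipairs (total ns h))) * real (card (mperms ns h))) else 0)"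
proof -
  let ?M = "mperms ns h"
  let ?I = "Ipairs (total ns h)"
  let ?C = "1 + real Kc / real (TT ns h)"
  have finI: "finite ?I" unfolding Ipairs_def
    by (rule finite_subset[of _ "{..<total ns h} \<times> {..<total ns h}"]) auto
  have "(0, 1) \<in> ?I" unfolding Ipairs_def using N4 by simp
  then have neI: "?I \<noteq> {}" by blast
  have "pmf (pistar_pmf ns h) \<sigma> = (\<Sum>x\<in>?M. (\<Sum>p\<in>?I. pmf ((\<lambda>(i, j). inner_pmf ns h x i j) p) \<sigma>) / real (card ?I)) / real (card ?M)"
    unfolding pistar_eq pi_pmf_def
    by (simp add: pmf_bind_pmf_of_set[OF mperms_nonempty finite_mperms] pmf_bind_pmf_of_set[OF neI finI])
  also have "\<dots> = (\<Sum>p\<in>?I. \<Sum>x\<in>?M. pmf ((\<lambda>(i, j). inner_pmf ns h x i j) p) \<sigma>) / (real (card ?I) * real (card ?M))"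
    by (simp add: sum_divide_distrib[symmetric] sum.swap[of _ ?M] divide_divide_eq_left mult.commute)
  also have "(\<Sum>p\<in>?I. \<Sum>x\<in>?M. pmf ((\<lambda>(i, j). inner_pmf ns h x i j) p) \<sigma>)
      = (\<Sum>p\<in>?I. if \<sigma> \<in> ?M \<and> \<sigma>!snd p < \<sigma>!fst p then ?C else 0)"
  proof (intro sum.cong refl)
    fix p assume p: "p \<in> ?I"
    obtain i j where e: "p = (i, j)" by (cases p)
    have ij: "i < j" "j < total ns h" using p e unfolding Ipairs_def by auto
    show "(\<Sum>x\<in>?M. pmf ((\<lambda>(i, j). inner_pmf ns h x i j) p) \<sigma>) = (if \<sigma> \<in> ?M \<and> \<sigma>!snd p < \<sigma>!fst p then ?C else 0)"
      unfolding e using Hsum[OF ij] by simp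
  qed
  also have "\<dots> = (if \<sigma> \<in> ?M then ?C * real (inversions \<sigma>) else 0)"
  proof (cases "\<sigma> \<in> ?M")
    case True
    have "(\<Sum>p\<in>?I. if \<sigma> \<in> ?M \<and> \<sigma>!snd p < \<sigma>!fst p then ?C else 0) = (\<Sum>p\<in>?I. ?C * (if \<sigma>!snd p < \<sigma>!fst p then 1 else 0))"
      using True by (intro sum.cong refl) auto
    also have "\<dots> = ?C * real (card {p\<in>?I. \<sigma>!snd p < \<sigma>!fst p})"
      by (simp add: sum_distrib_left[symmetric] sum_indicator_card[OF finI])
    also have "{p\<in>?I. \<sigma>!snd p < \<sigma>!fst p} = {(i, j). i < j \<and> j < length \<sigma> \<and> \<sigma> ! i > \<sigma> ! j}"
      using mperms_length[OF True] unfolding Ipairs_def by auto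
    finally show ?thesis using True unfolding inversions_def by simp
  qed simp
  finally show ?thesis by simp
qed

end

theorem lemma2p8:
  fixes ns :: "nat \<Rightarrow> nat" and h :: nat
  assumes "h \<ge> 2"
    and "\<forall>a\<in>{1..h}. ns a > 0"
    and "total ns h \<ge> 4"
  shows "size_biased (map_pmf (\<lambda>xs. real (inversions xs)) (pi_pmf ns h))
                     (map_pmf (\<lambda>xs. real (inversions xs)) (pistar_pmf ns h))"
proof -
  let ?M = "mperms ns h"
  let ?Q = "pistar_pmf ns h"
  let ?iv = "\<lambda>xs. real (inversions xs)"
  define c where "c = (1 + real (Kc ns h) / real (TT ns h)) / (real (card (Ipairs (total ns h))) * real (card ?M))"
  have pQ: "pmf ?Q \<sigma> = (if \<sigma> \<in> ?M then c * ?iv \<sigma> else 0)" for \<sigma>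
    using pmf_pistar[OF assms, of \<sigma>] unfolding c_def by simp
  have setQ: "set_pmf ?Q \<subseteq> ?M"
  proof
    fix \<sigma> assume "\<sigma> \<in> set_pmf ?Q"
    then have "pmf ?Q \<sigma> \<noteq> 0" by (simp add: set_pmf_iff)
    then show "\<sigma> \<in> ?M" using pQ[of \<sigma>] by (auto split: if_splits)
  qed
  have "(\<Sum>\<sigma>\<in>?M. pmf ?Q \<sigma>) = 1" by (rule sum_pmf_eq_1[OF finite_mperms setQ])
  then have cS: "c * (\<Sum>\<sigma>\<in>?M. ?iv \<sigma>) = 1"
    using pQ by (simp add: sum_distrib_left)
  show ?thesis unfolding size_biased_def
  proof (intro allI impI conjI)
    fix f :: "real \<Rightarrow> real"
    have finQ: "finite (set_pmf (map_pmf ?iv ?Q))"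
      using finite_subset[OF setQ finite_mperms] by simp
    show "integrable (measure_pmf (map_pmf ?iv ?Q)) f"
      by (rule integrable_measure_pmf_finite[OF finQ])
    define G where "G = (\<Sum>x\<in>?M. ?iv x * f (?iv x))"
    define S where "S = (\<Sum>x\<in>?M. ?iv x)"
    define m where "m = real (card ?M)"
    have E1: "measure_pmf.expectation (map_pmf ?iv (pi_pmf ns h)) (\<lambda>w. w * f w) = G / m"
      unfolding pi_pmf_def G_def m_def
      by (simp add: integral_pmf_of_set[OF mperms_nonempty finite_mperms])
    have E2: "measure_pmf.expectation (map_pmf ?iv (pi_pmf ns h)) (\<lambda>w. w) = S / m"
      unfolding pi_pmf_def S_def m_def
      by (simp add: integral_pmf_of_set[OF mperms_nonempty finite_mperms])
    have "measure_pmf.expectation (map_pmf ?iv ?Q) f = (\<Sum>\<sigma>\<in>?M. f (?iv \<sigma>) * pmf ?Q \<sigma>)"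
      unfolding integral_map_pmf
      by (rule integral_measure_pmf_real[OF finite_mperms]) (use setQ in auto)
    also have "\<dots> = c * G"
      unfolding G_def sum_distrib_left using pQ by (intro sum.cong refl) simp
    finally have E3: "measure_pmf.expectation (map_pmf ?iv ?Q) f = c * G" .
    have "S / m * (c * G) = (c * S) * (G / m)" by (simp add: mult_ac)
    also have "\<dots> = G / m" using cS unfolding S_def by simp
    finally show "measure_pmf.expectation (map_pmf ?iv (pi_pmf ns h)) (\<lambda>w. w * f w) =
        measure_pmf.expectation (map_pmf ?iv (pi_pmf ns h)) (\<lambda>w. w) * measure_pmf.expectation (map_pmf ?iv ?Q) f"
      using E1 E2 E3 by simp
  qed
qed

end
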